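(* Let $d,e,r\geq 2$ be integers, and let $S(d,e,r)$ be the smallest set of positive integers such that (a) $r\in S$; (b) $n\in S$ whenever $n^e\in S$; (c) $(n+d)^e\in S$ whenever $n\in S$. Then $$S(d,e,r)=\{n\geq 2 : n\not\equiv 0 \pmod d\}$$ if and only if all of the following hold: (1) $d=p$ is prime; (2) $r\not\equiv 0\pmod p$; (3) $e$ is a multiple of the radical of $p-1$, i.e. if $p-1=p_1^{n_1}\cdots p_k^{n_k}$ with distinct primes $p_i$ and $n_i\geq 1$, then $p_1p_2\cdots p_k \mid e$.
   Context: "Smallest" means contained in every set of positive integers satisfying (a), (b), (c). The set $S(d,e,r)$ is called a maximal solution when it equals $\{n\geq 2 : n\not\equiv 0 \pmod d\}$. *)

theory Defs
  imports "HOL-Computational_Algebra.Primes"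
begin

inductive_set Sset :: "nat \<Rightarrow> nat \<Rightarrow> nat \<Rightarrow> nat set" for d e r where
  base: "r > 0 \<Longrightarrow> r \<in> Sset d e r"
| root: "n > 0 \<Longrightarrow> n ^ e \<in> Sset d e r \<Longrightarrow> n \<in> Sset d e r"
| shift: "n \<in> Sset d e r \<Longrightarrow> (n + d) ^ e \<in> Sset d e r"

end

theory Submission
  imports Defs "HOL-Number_Theory.Number_Theory"
begin

lemma S_ge2:
  assumes "n \<in> Sset d e r" "r \<ge> 2" "d \<ge> 2" "e \<ge> 1"
  shows "n \<ge> 2"
  using assms(1)
proof induction
  case base then show ?case using assms by simp
next
  case (root n)
  show ?case
  proof (rule ccontr)
    assume "\<not> 2 \<le> n" with root have "n = 1" by simp
    with root show False by simp
  qed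
next
  case (shift n)
  have "n + d \<le> (n + d) ^ e"
    by (rule self_le_power) (use assms(3,4) in auto)
  then show ?case using assms(3) by linarith
qed

lemma S_add:
  assumes "n \<in> Sset d e r" "d \<ge> 2"
  shows "n + d \<in> Sset d e r"
  using Sset.root[OF _ Sset.shift[OF assms(1)]] assms(2) by simp

lemma S_add_mult:
  assumes "n \<in> Sset d e r" "d \<ge> 2"
  shows "n + k * d \<in> Sset d e r"
proof (induction k)
  case 0 then show ?case using assms by simp
next
  case (Suc k)
  from S_add[OF Suc assms(2)] show ?case by (simp add: algebra_simps)
qed

lemma S_cong_up:
  assumes "s \<in> Sset d e r" "d \<ge> 2" "s \<le> m" "m mod d = s mod d"
  shows "m \<in> Sset d e r"
proof -
  have "d dvd m - s" using assms(3,4) by (metis mod_eq_dvd_iff_nat)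
  then obtain k where k: "m - s = d * k" by blast
  have "m = s + (m - s)" using assms(3) by simp
  then have "m = s + k * d" using k by (simp add: mult.commute)
  with S_add_mult[OF assms(1,2)] show ?thesis by metis
qed

lemma S_pow_down:
  assumes "n > 0" "n ^ (e ^ k) \<in> Sset d e r"
  shows "n \<in> Sset d e r"
  using assms(2)
proof (induction k)
  case 0 then show ?case by simp
next
  case (Suc k)
  have "(n ^ (e ^ k)) ^ e \<in> Sset d e r"
  proof -
    have "n ^ (e ^ Suc k) = (n ^ (e ^ k)) ^ e" by (simp only: power_Suc2 power_mult)
    then show ?thesis using Suc.prems by simp
  qed
  then have "n ^ (e ^ k) \<in> Sset d e r"
    using Sset.root assms(1) by simp
  then show ?case using Suc.IH by simp
qed

lemma S_seq:
  assumes "r > 0"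
  shows "\<exists>s\<in>Sset d e r. s mod d = r ^ (e ^ k) mod d"
proof (induction k)
  case 0 then show ?case using Sset.base[OF assms] by auto
next
  case (Suc k)
  then obtain s where s: "s \<in> Sset d e r" "s mod d = r ^ (e ^ k) mod d" by blast
  have "(s + d) ^ e mod d = (s mod d) ^ e mod d"
    by (metis mod_add_self2 power_mod)
  also have "\<dots> = (r ^ (e ^ k) mod d) ^ e mod d" using s by simp
  also have "\<dots> = (r ^ (e ^ k)) ^ e mod d" by (rule power_mod)
  also have "(r ^ (e ^ k)) ^ e = r ^ (e ^ Suc k)" by (simp only: power_Suc2 power_mult)
  finally show ?case using Sset.shift[OF s(1)] by blast
qed

lemma dvd_pow_self:
  fixes m e :: nat
  assumes "m > 0" "e > 0" "\<And>q. prime q \<Longrightarrow> q dvd m \<Longrightarrow> q dvd e"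
  shows "m dvd e ^ m"
proof (rule multiplicity_le_imp_dvd)
  show "m \<noteq> 0" using assms by simp
  fix q :: nat assume q: "prime q"
  show "multiplicity q m \<le> multiplicity q (e ^ m)"
  proof (cases "q dvd m")
    case False then show ?thesis by (simp add: not_dvd_imp_multiplicity_0)
  next
    case True
    then have "q dvd e" using assms q by blast
    then have "multiplicity q e \<ge> 1" using assms(2) q
      by (simp add: Suc_le_eq prime_multiplicity_gt_zero_iff)
    moreover have "multiplicity q (e ^ m) = m * multiplicity q e"
      using q assms(2) by (simp add: prime_elem_multiplicity_power_distrib prime_imp_prime_elem)
    moreover have "multiplicity q m \<le> m"
    proof -
      have "q ^ multiplicity q m dvd m" by (rule multiplicity_dvd)
      then have "q ^ multiplicity q m \<le> m" using assms(1) by (simp add: dvd_imp_le)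
      moreover have "multiplicity q m < 2 ^ multiplicity q m" by (rule less_exp)
      moreover have "2 ^ multiplicity q m \<le> q ^ multiplicity q m"
        using prime_ge_2_nat[OF q] by (simp add: power_mono)
      ultimately show ?thesis by linarith
    qed
    ultimately show ?thesis by (metis le_trans mult_le_mono2 mult.comm_neutral)
  qed
qed

lemma prod_primes_dvd:
  fixes A :: "nat set"
  assumes "finite A" "\<forall>q\<in>A. prime q" "\<forall>q\<in>A. q dvd e"
  shows "(\<Prod>q\<in>A. q) dvd e"
  using assms
proof (induction A rule: finite_induct)
  case empty then show ?case by simp
next
  case (insert x F)
  have "coprime x (\<Prod>q\<in>F. q)"
  proof (rule prime_imp_coprime)
    show "prime x" using insert by simp
    show "\<not> x dvd (\<Prod>q\<in>F. q)"
    proof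
      assume "x dvd (\<Prod>q\<in>F. q)"
      then obtain y where "y \<in> F" "x dvd y"
        using prime_dvd_prod_iff[OF insert(1)] insert by (metis insertI1)
      then have "x = y" using insert by (metis insertCI prime_nat_iff primes_dvd_imp_eq)
      then show False using \<open>y \<in> F\<close> insert by simp
    qed
  qed
  then show ?case using insert by (simp add: divides_mult)
qed

lemma inv_q:
  assumes "n \<in> Sset d e r" "prime q" "q dvd d" "e > 0"
  shows "q dvd n \<longleftrightarrow> q dvd r"
  using assms(1)
proof induction
  case base then show ?case by simp
next
  case (root n)
  then show ?case using assms by (simp add: prime_dvd_power_iff)
next
  case (shift n)
  have "q dvd (n + d) ^ e \<longleftrightarrow> q dvd n + d" using assms by (simp add: prime_dvd_power_iff)
  also have "\<dots> \<longleftrightarrow> q dvd n" using assms(3) by (simp add: dvd_add_left_iff)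
  finally show ?case using shift by simp
qed

lemma key_pow:
  fixes p q k e x :: nat
  assumes "prime p" "\<not> p dvd x" "q * k = p - 1" "prime q" "\<not> q dvd e"
  shows "(x ^ e) ^ k mod p = 1 \<longleftrightarrow> x ^ k mod p = 1"
proof
  have eq: "(x ^ e) ^ k = (x ^ k) ^ e" by (simp add: power_mult[symmetric] mult.commute)
  assume "x ^ k mod p = 1"
  then have "(x ^ k) ^ e mod p = 1 ^ e mod p"
    by (metis power_mod)
  then show "(x ^ e) ^ k mod p = 1" unfolding eq
    using prime_gt_1_nat[OF assms(1)] by simp
next
  have p1: "p > 1" using assms(1) prime_gt_1_nat by blast
  have eq: "(x ^ e) ^ k = (x ^ k) ^ e" by (simp add: power_mult[symmetric] mult.commute)
  assume "(x ^ e) ^ k mod p = 1"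
  then have "[(x ^ k) ^ e = 1] (mod p)" unfolding eq cong_def using p1 by simp
  then have a: "ord p (x ^ k) dvd e" by (simp only: ord_divides)
  have "[x ^ (p - 1) = 1] (mod p)" using fermat_theorem assms by blast
  then have "[(x ^ k) ^ q = 1] (mod p)" using assms(3)
    by (simp add: power_mult[symmetric] mult.commute)
  then have b: "ord p (x ^ k) dvd q" by (simp only: ord_divides)
  have "coprime q e" using assms(4,5) by (simp add: prime_imp_coprime)
  then have "ord p (x ^ k) dvd 1" using a b
    using coprime_common_divisor[OF _ b a] by simp
  then have "[(x ^ k) ^ 1 = 1] (mod p)" using ord_divides by blast
  then show "x ^ k mod p = 1" using p1 by (simp add: cong_def)
qed

lemma inv_p:
  assumes "n \<in> Sset p e r" "prime p" "\<not> p dvd r" "q * k = p - 1" "prime q" "\<not> q dvd e" "e > 0"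
  shows "\<not> p dvd n \<and> (n ^ k mod p = 1 \<longleftrightarrow> r ^ k mod p = 1)"
  using assms(1)
proof induction
  case base then show ?case using assms by simp
next
  case (root n)
  then have "\<not> p dvd n" using assms by (simp add: prime_dvd_power_iff)
  then show ?case using root key_pow[OF assms(2) _ assms(4,5,6)] by simp
next
  case (shift n)
  have np: "\<not> p dvd n + p" using shift by simp
  then have "\<not> p dvd (n + p) ^ e" using assms by (simp add: prime_dvd_power_iff)
  moreover have "(n + p) ^ k mod p = n ^ k mod p" by (metis mod_add_self2 power_mod)
  ultimately show ?case using shift key_pow[OF assms(2) np assms(4,5,6)] by simp
qed

lemma fermat_mult:
  fixes p x t :: nat
  assumes "prime p" "\<not> p dvd x" "(p - 1) dvd t"
  shows "x ^ t mod p = 1"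
proof -
  obtain c where c: "t = (p - 1) * c" using assms(3) by blast
  have p1: "p > 1" using prime_gt_1_nat[OF assms(1)] .
  have "[x ^ (p - 1) = 1] (mod p)" using fermat_theorem[OF assms(1,2)] .
  then have "[(x ^ (p - 1)) ^ c = 1 ^ c] (mod p)" by (rule cong_pow)
  then have "[x ^ t = 1] (mod p)" unfolding c power_mult by simp
  then show ?thesis using p1 unfolding cong_def by simp
qed

theorem theorem17:
  fixes d e r :: nat
  assumes "d \<ge> 2" and "e \<ge> 2" and "r \<ge> 2"
  shows "Sset d e r = {n. n \<ge> 2 \<and> \<not> d dvd n} \<longleftrightarrow>
           (prime d \<and> \<not> d dvd r \<and> (\<Prod>q\<in>prime_factors (d - 1). q) dvd e)"
proof
  assume R: "prime d \<and> \<not> d dvd r \<and> (\<Prod>q\<in>prime_factors (d - 1). q) dvd e"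
  then have pd: "prime d" and nr: "\<not> d dvd r" and pe: "(\<Prod>q\<in>prime_factors (d - 1). q) dvd e" by auto
  show "Sset d e r = {n. n \<ge> 2 \<and> \<not> d dvd n}"
  proof (intro equalityI subsetI)
    fix n assume n: "n \<in> Sset d e r"
    have "n \<ge> 2" using S_ge2[OF n] assms by simp
    moreover have "\<not> d dvd n" using inv_q[OF n pd dvd_refl] assms nr by simp
    ultimately show "n \<in> {n. n \<ge> 2 \<and> \<not> d dvd n}" by simp
  next
    fix n assume "n \<in> {n. n \<ge> 2 \<and> \<not> d dvd n}"
    then have n2: "n \<ge> 2" and nd: "\<not> d dvd n" by auto
    have dv: "(d - 1) dvd e ^ (d - 1)"
    proof (rule dvd_pow_self)
      show "d - 1 > 0" using assms by simp
      show "e > 0" using assms by simp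
      fix q :: nat assume "prime q" "q dvd d - 1"
      then have "q \<in> prime_factors (d - 1)" using assms by (auto simp: in_prime_factors_iff)
      then have "q dvd (\<Prod>q\<in>prime_factors (d - 1). q)" by (rule dvd_prodI[OF finite_set_mset])
      then show "q dvd e" using pe by (rule dvd_trans)
    qed
    obtain s where s: "s \<in> Sset d e r" "s mod d = r ^ (e ^ (d - 1)) mod d"
      using S_seq[of r d e "d - 1"] assms by auto
    have s1: "s mod d = 1" using s(2) fermat_mult[OF pd nr dv] by simp
    define K where "K = (d - 1) + s"
    have dK: "(d - 1) dvd e ^ K" unfolding K_def power_add using dv by simp
    have "s < 2 ^ s" by (rule less_exp)
    also have "\<dots> \<le> 2 ^ K" unfolding K_def by (simp add: power_increasing)
    also have "\<dots> \<le> e ^ K" using assms by (simp add: power_mono)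
    also have "\<dots> < 2 ^ (e ^ K)" by (rule less_exp)
    also have "\<dots> \<le> n ^ (e ^ K)" using n2 by (simp add: power_mono)
    finally have le: "s \<le> n ^ (e ^ K)" by simp
    have "n ^ (e ^ K) mod d = 1" using fermat_mult[OF pd nd dK] .
    then have "n ^ (e ^ K) \<in> Sset d e r" using S_cong_up[OF s(1) assms(1) le] s1 by simp
    then show "n \<in> Sset d e r" using S_pow_down n2 by simp
  qed
next
  assume E: "Sset d e r = {n. n \<ge> 2 \<and> \<not> d dvd n}"
  have rS: "r \<in> Sset d e r" using assms by (simp add: Sset.base)
  then have nr: "\<not> d dvd r" using E by simp
  have pd: "prime d"
  proof (rule ccontr)
    assume np: "\<not> prime d"
    obtain q :: nat where q: "prime q" "q dvd d" using prime_factor_nat[of d] assms by auto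
    have qd: "q < d" using q np assms
    proof -
      have "q \<le> d" using q(2) assms(1) by (simp add: dvd_imp_le)
      moreover have "q \<noteq> d" using q(1) np by auto
      ultimately show ?thesis by simp
    qed
    show False
    proof (cases "q dvd r")
      case True
      have "\<not> d dvd d + 1"
      proof
        assume "d dvd d + 1" then have "d dvd 1" using dvd_add_right_iff[of d d 1] by simp
        with assms show False by simp
      qed
      then have "d + 1 \<in> Sset d e r" using E assms by simp
      then have "q dvd d + 1" using inv_q[OF _ q] True assms by simp
      then have "q dvd 1" using q(2) dvd_add_right_iff by blast
      then show False using q(1) by simp
    next
      case False
      have q0: "q > 0" using prime_gt_0_nat[OF q(1)] .
      have "\<not> d dvd q"
      proof
        assume "d dvd q" then have "d \<le> q" using q0 by (rule dvd_imp_le)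
        then show False using qd by simp
      qed
      then have qS: "q \<in> Sset d e r" using E prime_ge_2_nat[OF q(1)] by simp
      have "e > 0" using assms by simp
      from inv_q[OF qS q this] have "q dvd r" by simp

      then show False using False by simp
    qed
  qed
  have pe: "(\<Prod>q\<in>prime_factors (d - 1). q) dvd e"
  proof (rule ccontr)
    assume npe: "\<not> (\<Prod>q\<in>prime_factors (d - 1). q) dvd e"
    obtain q where qP: "q \<in> prime_factors (d - 1)" and qe: "\<not> q dvd e"
      using prod_primes_dvd[of "prime_factors (d - 1)" e] npe by auto
    have q: "prime q" "q dvd d - 1" using qP by auto
    define k where "k = (d - 1) div q"
    have qk: "q * k = d - 1" using q(2) unfolding k_def by simp
    have q2: "q \<ge> 2" using prime_ge_2_nat[OF q(1)] .
    have kpos: "k > 0"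
    proof (rule ccontr)
      assume "\<not> k > 0" then have "k = 0" by simp
      then show False using qk assms by simp
    qed
    have "1 * k < q * k" using q2 kpos by (intro mult_strict_right_mono) auto
    then have klt: "k < d - 1" using qk by simp
    have inv: "\<And>n. n \<in> Sset d e r \<Longrightarrow> \<not> d dvd n \<and> (n ^ k mod d = 1 \<longleftrightarrow> r ^ k mod d = 1)"
      using inv_p[OF _ pd nr qk q(1) qe] assms by simp
    have d1: "d > 1" using assms by simp
    show False
    proof (cases "r ^ k mod d = 1")
      case False
      have "\<not> d dvd d + 1"
      proof
        assume "d dvd d + 1" then have "d dvd 1" using dvd_add_right_iff[of d d 1] by simp
        with assms show False by simp
      qed
      then have "d + 1 \<in> Sset d e r" using E assms by simp
      moreover have "(d + 1) ^ k mod d = 1"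
      proof -
        have "(d + 1) ^ k mod d = ((d + 1) mod d) ^ k mod d" by (rule power_mod[symmetric])
        also have "(d + 1) mod d = 1" using d1 mod_add_self1[of d 1] by simp
        finally show ?thesis using d1 by simp
      qed
      ultimately show False using inv False by blast
    next
      case True
      obtain g where g: "residue_primroot d g" using prime_primitive_root_exists[OF _ pd] d1 by blast
      then have cg: "coprime d g" and og: "ord d g = d - 1"
        by (auto simp: residue_primroot_def totient_prime[OF pd])
      have ndg: "\<not> d dvd g"
      proof
        assume "d dvd g" then have "d dvd 1" using cg by (meson coprime_common_divisor dvd_refl)
        then show False using d1 by simp
      qed
      then have "\<not> d dvd g + d" by (simp add: dvd_add_left_iff)
      moreover have "g + d \<ge> 2" using assms(1) by simp
      ultimately have "g + d \<in> Sset d e r" using E by simp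
      then have "(g + d) ^ k mod d = 1" using inv True by blast
      moreover have "(g + d) ^ k mod d = g ^ k mod d"
      proof -
        have "(g + d) ^ k mod d = ((g + d) mod d) ^ k mod d" by (rule power_mod[symmetric])
        also have "\<dots> = (g mod d) ^ k mod d" by simp
        also have "\<dots> = g ^ k mod d" by (rule power_mod)
        finally show ?thesis .
      qed
      ultimately have "g ^ k mod d = 1" by simp
      then have "[g ^ k = 1] (mod d)" using d1 by (simp add: cong_def)
      then have "ord d g dvd k" by (simp only: ord_divides)
      then have "(d - 1) dvd k" using og by simp
      then show False using kpos klt by (simp add: nat_dvd_not_less)
    qed
  qed
  show "prime d \<and> \<not> d dvd r \<and> (\<Prod>q\<in>prime_factors (d - 1). q) dvd e"
    using pd nr pe by simp
qed

end
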